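(* For all functions $s,f,g,t$ of the input length $n$, $$\mathrm{IP}(O(s(n))\ \mathrm{space},\ O(f(n))\ \mathrm{private\ random\ bits},\ O(g(n))\ \mathrm{public\ random\ bits},\ O(t(n))\ \mathrm{time})\subseteq \mathrm{IP}(O(s(n))\ \mathrm{space},\ O(f(n)+g(n))\ \mathrm{private\ random\ bits},\ O(t(n))\ \mathrm{time}).$$ This inclusion also holds when both classes are replaced by their $\mathrm{IP}^{\mathrm{high}}$ variants, and when the worst-case bounds are replaced by bounds on expected usage.
   Context: Interactive proof systems. A verifier is a probabilistic Turing machine with a read-only input tape containing $\rhd w\lhd$, a read-write work tape, and a read-write communication cell shared with a prover. Its states may flip private coins (fair random bits hidden from the prover), flip public coins (fair random bits revealed to the prover; public-coin states are communication states), and/or write to the communication cell. In each step, based on the state, the scanned input, work and communication symbols and the coin outcomes, it changes state, writes on the work tape, writes to the communication cell (if in a communication state), and moves its heads. Each time the verifier writes to the communication cell, the prover overwrites it with a symbol that is an arbitrary function of $w$, the history of public coin outcomes, and the communication symbols so far; the prover does not see private coins or the verifier's internal configuration. The verifier halts on entering accept/reject; it may run forever. $V$ verifies $L$ with error $\varepsilon=\max(\varepsilon^+,\varepsilon^-)$, $\varepsilon^\pm<1/2$, if some prover makes $V$ accept every $w\in L$ with probability at least $1-\varepsilon^+$, and for every prover and every $w\notin L$, $V$ halts and rejects with probability at least $1-\varepsilon^-$. $\mathrm{IP}^{\mathrm{high}}(\ldots)$ is the class of languages verifiable with some error $\varepsilon<1/2$ by verifiers within the listed resource bounds; $\mathrm{IP}(\ldots)$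 is the class of languages verifiable with arbitrarily low error, i.e. for every $\varepsilon>0$ there is a verifier within the listed bounds verifying $L$ with error at most $\varepsilon$. Bounds (space = work-tape cells, numbers of private/public random bits, time) are worst-case functions of the input length $n$ unless stated to be expected values; an unlisted resource (here, public coins in the right-hand class) is unavailable. *)

theory Defs
  imports Main "HOL-Library.Landau_Symbols"
begin

datatype 'i cell = LEnd | Sym 'i | REnd

text \<open>Events visible to the prover: public coin outcomes, verifier messages,
  prover messages (in chronological order).\<close>
datatype event = PubCoin bool | VMsg nat | PMsg nat

text \<open>States, work-tape symbols and communication symbols are
  natural numbers, restricted to finite alphabets by wf_verifier.  Work blank is 0,
  initial content of the communication cell is 0.
  delta q a x c bp bu = (q', x', c', di, dw): new state, symbol written on work tape,
  symbol written to communication cell (used only in communication states),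
  input head move, work head move.  bp / bu are the private / public coin outcomes
  (only meaningful in private- / public-coin states; otherwise False is supplied).\<close>
record 'i verifier =
  states :: "nat set"
  start  :: nat
  accst  :: nat
  rejst  :: nat
  workA  :: "nat set"
  commA  :: "nat set"
  priv   :: "nat \<Rightarrow> bool"
  pub    :: "nat \<Rightarrow> bool"
  comm   :: "nat \<Rightarrow> bool"
  delta  :: "nat \<Rightarrow> 'i cell \<Rightarrow> nat \<Rightarrow> nat \<Rightarrow> bool \<Rightarrow> bool \<Rightarrow> nat \<times> nat \<times> nat \<times> int \<times> int"

definition wf_verifier :: "'i verifier \<Rightarrow> bool" where
  "wf_verifier V \<longleftrightarrow>
     finite (states V) \<and> finite (workA V) \<and> finite (commA V) \<and>
     start V \<in> states V \<and> accst V \<in> states V \<and> rejst V \<in> states V \<and> accst V \<noteq> rejst V \<and>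
     0 \<in> workA V \<and> 0 \<in> commA V \<and>
     (\<forall>q. pub V q \<longrightarrow> comm V q) \<and>
     (\<forall>q\<in>states V. \<forall>a x c bp bu. x \<in> workA V \<longrightarrow> c \<in> commA V \<longrightarrow>
        (case delta V q a x c bp bu of (q', x', c', di, dw) \<Rightarrow>
           q' \<in> states V \<and> x' \<in> workA V \<and> c' \<in> commA V \<and>
           di \<in> {-1, 0, 1} \<and> dw \<in> {-1, 0, 1}))"

type_synonym 'i prover = "'i list \<Rightarrow> event list \<Rightarrow> nat"

definition valid_prover :: "'i verifier \<Rightarrow> 'i prover \<Rightarrow> bool" where
  "valid_prover V P \<longleftrightarrow> (\<forall>w h. P w h \<in> commA V)"

record config =
  st      :: nat
  ipos    :: nat
  tape    :: "nat \<Rightarrow> nat"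
  wpos    :: nat
  ccell   :: nat
  hist    :: "event list"
  visited :: "nat set"
  nprivb  :: nat
  npubb   :: nat
  nsteps  :: nat

definition input_cell :: "'i list \<Rightarrow> nat \<Rightarrow> 'i cell" where
  "input_cell w i = (if i = 0 then LEnd else if i \<le> length w then Sym (w ! (i - 1)) else REnd)"

definition init_config :: "'i verifier \<Rightarrow> config" where
  "init_config V = \<lparr>st = start V, ipos = 0, tape = (\<lambda>_. 0), wpos = 0, ccell = 0, hist = [],
      visited = {0}, nprivb = 0, npubb = 0, nsteps = 0\<rparr>"

definition halted :: "'i verifier \<Rightarrow> config \<Rightarrow> bool" where
  "halted V c \<longleftrightarrow> st c = accst V \<or> st c = rejst V"

definition step :: "'i verifier \<Rightarrow> 'i prover \<Rightarrow> 'i list \<Rightarrow> config \<Rightarrow> bool \<Rightarrow> bool \<Rightarrow> config" where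
  "step V P w c bp bu =
    (let q = st c;
         (q', x', m, di, dw) = delta V q (input_cell w (ipos c)) (tape c (wpos c)) (ccell c) bp bu;
         h1 = (if pub V q then hist c @ [PubCoin bu] else hist c);
         h2 = (if comm V q then h1 @ [VMsg m] else h1);
         r = P w h2;
         cell' = (if comm V q then r else ccell c);
         h3 = (if comm V q then h2 @ [PMsg r] else h2);
         ip' = nat (min (int (length w) + 1) (int (ipos c) + di));
         wp' = nat (int (wpos c) + dw)
     in \<lparr>st = q', ipos = ip', tape = (tape c)(wpos c := x'), wpos = wp', ccell = cell',
         hist = h3, visited = insert wp' (visited c),
         nprivb = nprivb c + (if priv V q then 1 else 0),
         npubb = npubb c + (if pub V q then 1 else 0),
         nsteps = Suc (nsteps c)\<rparr>)"

definition coins :: "bool \<Rightarrow> bool list" where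
  "coins b = (if b then [False, True] else [False])"

definition outcomes :: "'i verifier \<Rightarrow> config \<Rightarrow> (bool \<times> bool) list" where
  "outcomes V c = List.product (coins (priv V (st c))) (coins (pub V (st c)))"

definition avg_step :: "'i verifier \<Rightarrow> 'i prover \<Rightarrow> 'i list \<Rightarrow> config \<Rightarrow> (config \<Rightarrow> real) \<Rightarrow> real" where
  "avg_step V P w c F =
     sum_list (map (\<lambda>(bp, bu). F (step V P w c bp bu)) (outcomes V c)) / real (length (outcomes V c))"

primrec acc_within :: "'i verifier \<Rightarrow> 'i prover \<Rightarrow> 'i list \<Rightarrow> nat \<Rightarrow> config \<Rightarrow> real" where
  "acc_within V P w 0 c = (if st c = accst V then 1 else 0)"
| "acc_within V P w (Suc k) c =
     (if halted V c then (if st c = accst V then 1 else 0)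
      else avg_step V P w c (acc_within V P w k))"

primrec rej_within :: "'i verifier \<Rightarrow> 'i prover \<Rightarrow> 'i list \<Rightarrow> nat \<Rightarrow> config \<Rightarrow> real" where
  "rej_within V P w 0 c = (if st c = rejst V then 1 else 0)"
| "rej_within V P w (Suc k) c =
     (if halted V c then (if st c = rejst V then 1 else 0)
      else avg_step V P w c (rej_within V P w k))"

definition acc_prob :: "'i verifier \<Rightarrow> 'i prover \<Rightarrow> 'i list \<Rightarrow> real" where
  "acc_prob V P w = (SUP k. acc_within V P w k (init_config V))"

definition rej_prob :: "'i verifier \<Rightarrow> 'i prover \<Rightarrow> 'i list \<Rightarrow> real" where
  "rej_prob V P w = (SUP k. rej_within V P w k (init_config V))"

text \<open>Expected value of a (monotone) resource counter R after min(k, halting time) steps.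
  The expected usage is the limit (supremum) over k.\<close>
primrec exp_within :: "'i verifier \<Rightarrow> 'i prover \<Rightarrow> 'i list \<Rightarrow> (config \<Rightarrow> nat) \<Rightarrow> nat \<Rightarrow> config \<Rightarrow> real" where
  "exp_within V P w R 0 c = real (R c)"
| "exp_within V P w R (Suc k) c =
     (if halted V c then real (R c) else avg_step V P w c (exp_within V P w R k))"

inductive_set reach :: "'i verifier \<Rightarrow> 'i prover \<Rightarrow> 'i list \<Rightarrow> config set"
  for V P w where
  init: "init_config V \<in> reach V P w"
| step: "c \<in> reach V P w \<Longrightarrow> \<not> halted V c \<Longrightarrow> (bp, bu) \<in> set (outcomes V c) \<Longrightarrow>
         step V P w c bp bu \<in> reach V P w"

definition space_used :: "config \<Rightarrow> nat" where "space_used c = card (visited c)"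

definition within_bounds ::
  "bool \<Rightarrow> 'i verifier \<Rightarrow> (nat \<Rightarrow> real) \<Rightarrow> (nat \<Rightarrow> real) \<Rightarrow> (nat \<Rightarrow> real) \<Rightarrow> (nat \<Rightarrow> real) \<Rightarrow> bool" where
  "within_bounds expected V bs bf bg bt \<longleftrightarrow>
     (\<forall>w P. valid_prover V P \<longrightarrow>
        (if expected then
           (\<forall>k. exp_within V P w space_used k (init_config V) \<le> bs (length w) \<and>
                exp_within V P w nprivb k (init_config V) \<le> bf (length w) \<and>
                exp_within V P w npubb k (init_config V) \<le> bg (length w) \<and>
                exp_within V P w nsteps k (init_config V) \<le> bt (length w))
         else
           (\<forall>c\<in>reach V P w. real (space_used c) \<le> bs (length w) \<and>
                real (nprivb c) \<le> bf (length w) \<and>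
                real (npubb c) \<le> bg (length w) \<and>
                real (nsteps c) \<le> bt (length w))))"

definition verifies :: "'i verifier \<Rightarrow> 'i list set \<Rightarrow> real \<Rightarrow> real \<Rightarrow> bool" where
  "verifies V L ep em \<longleftrightarrow> ep < 1/2 \<and> em < 1/2 \<and>
     (\<exists>P. valid_prover V P \<and> (\<forall>w\<in>L. acc_prob V P w \<ge> 1 - ep)) \<and>
     (\<forall>P. valid_prover V P \<longrightarrow> (\<forall>w. w \<notin> L \<longrightarrow> rej_prob V P w \<ge> 1 - em))"

definition admissible ::
  "bool \<Rightarrow> bool \<Rightarrow> 'i verifier \<Rightarrow> (nat \<Rightarrow> nat) \<Rightarrow> (nat \<Rightarrow> nat) \<Rightarrow> (nat \<Rightarrow> nat) \<Rightarrow> (nat \<Rightarrow> nat) \<Rightarrow> bool" where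
  "admissible expected public V s f g t \<longleftrightarrow>
     wf_verifier V \<and> (\<not> public \<longrightarrow> (\<forall>q\<in>states V. \<not> pub V q)) \<and>
     (\<exists>bs bf bg bt. bs \<in> O(\<lambda>n. real (s n)) \<and> bf \<in> O(\<lambda>n. real (f n)) \<and>
        bg \<in> O(\<lambda>n. real (g n)) \<and> bt \<in> O(\<lambda>n. real (t n)) \<and>
        within_bounds expected V bs bf bg bt)"

definition IP_high ::
  "bool \<Rightarrow> bool \<Rightarrow> (nat \<Rightarrow> nat) \<Rightarrow> (nat \<Rightarrow> nat) \<Rightarrow> (nat \<Rightarrow> nat) \<Rightarrow> (nat \<Rightarrow> nat) \<Rightarrow> ('i::finite) list set set" where
  "IP_high expected public s f g t =
     {L. \<exists>V ep em. admissible expected public V s f g t \<and> verifies V L ep em}"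

definition IP ::
  "bool \<Rightarrow> bool \<Rightarrow> (nat \<Rightarrow> nat) \<Rightarrow> (nat \<Rightarrow> nat) \<Rightarrow> (nat \<Rightarrow> nat) \<Rightarrow> (nat \<Rightarrow> nat) \<Rightarrow> ('i::finite) list set set" where
  "IP expected public s f g t =
     {L. \<forall>\<epsilon>>0. \<exists>V ep em. admissible expected public V s f g t \<and> verifies V L ep em \<and>
                         max ep em \<le> \<epsilon>}"

end

theory Submission
  imports Defs
begin

definition clampc :: "'i verifier \<Rightarrow> nat \<Rightarrow> nat" where
  "clampc V x = (if x \<in> commA V then x else 0)"

lemma clampc_idem[simp]: "0 \<in> commA V \<Longrightarrow> clampc V (clampc V x) = clampc V x"
  by (simp add: clampc_def)

definition b12 :: "bool \<Rightarrow> nat" where "b12 b = (if b then 2 else 1)"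

lemma b12_div[simp]: "(3 * q + b12 b) div 3 = q"
  by (cases b) (auto simp: b12_def)
lemma b12_mod[simp]: "(3 * q + b12 b) mod 3 = b12 b"
  by (cases b) (simp_all add: b12_def, presburger+)
lemma b12_mod'[simp]: "b12 b mod 3 = b12 b" "b12 b div 3 = 0" "\<not> 3 dvd b12 b"
  by (auto simp: b12_def)
lemma b12_ndvd[simp]: "\<not> 3 dvd (3 * q + b12 b)"
  by (metis b12_mod b12_def dvd_eq_mod_eq_0 zero_neq_numeral one_neq_zero)
lemma b12_neq3[simp]: "3 * q + b12 b \<noteq> 3 * x"
proof
  assume "3 * q + b12 b = 3 * x"
  then have "(3 * q + b12 b) mod 3 = (3 * x) mod 3" by simp
  then show False by (simp add: b12_def split: if_splits)
qed
lemma b12_ne0[simp]: "b12 b \<noteq> 0" "(b12 b = 2) = b"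
  by (auto simp: b12_def)

definition conv :: "'i verifier \<Rightarrow> 'i verifier" where
  "conv V = \<lparr>states = (\<lambda>q. 3*q) ` states V \<union> (\<lambda>(q,b). 3*q + b12 b) ` (states V \<times> UNIV),
     start = 3 * start V, accst = 3 * accst V, rejst = 3 * rejst V, workA = workA V,
     commA = commA V \<union> {n. n div 3 \<in> commA V},
     priv = (\<lambda>n. if n mod 3 = 0 then priv V (n div 3) else pub V (n div 3)),
     pub = (\<lambda>n. False),
     comm = (\<lambda>n. n mod 3 \<noteq> 0 \<and> comm V (n div 3)),
     delta = (\<lambda>n a x c bp bu. if n mod 3 = 0 then (3 * (n div 3) + b12 bp, x, 0, 0, 0)
        else (case delta V (n div 3) a x (clampc V c) (n mod 3 = 2) bp of
               (q', x', m, di, dw) \<Rightarrow>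
                 (3 * q', x', if pub V (n div 3) then 3 * m + b12 bp else 3 * m, di, dw)))\<rparr>"

lemma conv_simps[simp]:
  "states (conv V) = (\<lambda>q. 3*q) ` states V \<union> (\<lambda>(q,b). 3*q + b12 b) ` (states V \<times> UNIV)"
  "start (conv V) = 3 * start V" "accst (conv V) = 3 * accst V" "rejst (conv V) = 3 * rejst V"
  "workA (conv V) = workA V" "commA (conv V) = commA V \<union> {n. n div 3 \<in> commA V}"
  "priv (conv V) n = (if n mod 3 = 0 then priv V (n div 3) else pub V (n div 3))"
  "pub (conv V) n = False"
  "comm (conv V) n = (n mod 3 \<noteq> 0 \<and> comm V (n div 3))"
  "delta (conv V) n a x c bp bu = (if n mod 3 = 0 then (3 * (n div 3) + b12 bp, x, 0, 0, 0)
        else (case delta V (n div 3) a x (clampc V c) (n mod 3 = 2) bp of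
               (q', x', m, di, dw) \<Rightarrow>
                 (3 * q', x', if pub V (n div 3) then 3 * m + b12 bp else 3 * m, di, dw)))"
  by (simp_all add: conv_def)

lemma finite_div3: "finite A \<Longrightarrow> finite {n::nat. n div 3 \<in> A}"
proof -
  assume "finite A"
  have "{n::nat. n div 3 \<in> A} \<subseteq> (\<lambda>(m,r). 3*m+r) ` (A \<times> {0,1,2})"
  proof
    fix n :: nat assume "n \<in> {n. n div 3 \<in> A}"
    then have "(n div 3, n mod 3) \<in> A \<times> {0,1,2}" by auto
    moreover have "n = (\<lambda>(m,r). 3*m+r) (n div 3, n mod 3)" by simp
    ultimately show "n \<in> (\<lambda>(m,r). 3*m+r) ` (A \<times> {0,1,2})" by (rule rev_image_eqI)
  qed
  then show ?thesis by (rule finite_subset) (use \<open>finite A\<close> in auto)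
qed

lemma wf_conv: assumes "wf_verifier V" shows "wf_verifier (conv V)"
proof -
  have W: "finite (states V)" "finite (workA V)" "finite (commA V)"
    "start V \<in> states V" "accst V \<in> states V" "rejst V \<in> states V" "accst V \<noteq> rejst V"
    "0 \<in> workA V" "0 \<in> commA V" "\<forall>q. pub V q \<longrightarrow> comm V q"
    using assms unfolding wf_verifier_def by auto
  have D: "\<forall>q\<in>states V. \<forall>a x c bp bu. x \<in> workA V \<longrightarrow> c \<in> commA V \<longrightarrow>
        (case delta V q a x c bp bu of (q', x', c', di, dw) \<Rightarrow>
           q' \<in> states V \<and> x' \<in> workA V \<and> c' \<in> commA V \<and>
           di \<in> {-1, 0, 1} \<and> dw \<in> {-1, 0, 1})"
    using assms unfolding wf_verifier_def by (elim conjE) assumption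
  have cl: "clampc V c \<in> commA V" for c using W(9) by (simp add: clampc_def)
  show ?thesis unfolding wf_verifier_def
  proof (intro conjI ballI allI impI)
    show "finite (states (conv V))" using W(1) by simp
    show "finite (commA (conv V))" using W(3) by (simp add: finite_div3)
  next
    fix q a x c bp bu assume q: "q \<in> states (conv V)" and x: "x \<in> workA (conv V)"
    show "case delta (conv V) q a x c bp bu of (q', x', c', di, dw) \<Rightarrow>
           q' \<in> states (conv V) \<and> x' \<in> workA (conv V) \<and> c' \<in> commA (conv V) \<and>
           di \<in> {-1, 0, 1} \<and> dw \<in> {-1, 0, 1}"
    proof (cases "q mod 3 = 0")
      case True
      then obtain q0 where "q = 3 * q0" "q0 \<in> states V" using q by auto
      then show ?thesis using x W by (auto simp: image_iff)
    next
      case False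
      then obtain q0 b where qq: "q = 3 * q0 + b12 b" "q0 \<in> states V" using q by auto
      obtain q' x' m di dw where e: "delta V q0 a x (clampc V c) b bp = (q', x', m, di, dw)"
        by (cases "delta V q0 a x (clampc V c) b bp") auto
      have "q' \<in> states V \<and> x' \<in> workA V \<and> m \<in> commA V \<and> di \<in> {-1, 0, 1} \<and> dw \<in> {-1, 0, 1}"
        using D[rule_format, where q=q0 and a=a and x=x and c="clampc V c" and bp=b and bu=bp] qq(2) cl x e by simp
      moreover have "delta (conv V) q a x c bp bu = (3*q', x', if pub V q0 then 3*m + b12 bp else 3*m, di, dw)"
        using qq e by simp
      ultimately show ?thesis using qq by (auto simp: image_iff)
    qed
  qed (use W in auto)
qed

fun dec :: "'i verifier \<Rightarrow> event list \<Rightarrow> event list" where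
  "dec V [] = []"
| "dec V (VMsg n # r) = (if n mod 3 = 0 then [VMsg (n div 3)] else [PubCoin (n mod 3 = 2), VMsg (n div 3)]) @ dec V r"
| "dec V (PMsg x # r) = PMsg (clampc V x) # dec V r"
| "dec V (PubCoin b # r) = PubCoin b # dec V r"

fun rb :: "(event list \<Rightarrow> nat) \<Rightarrow> event list \<Rightarrow> event list \<Rightarrow> event list" where
  "rb f acc [] = acc"
| "rb f acc (PubCoin b # VMsg m # r) = rb f (acc @ [VMsg (3 * m + b12 b)]) r"
| "rb f acc (VMsg m # r) = rb f (acc @ [VMsg (3 * m)]) r"
| "rb f acc (PMsg x # r) = rb f (acc @ [PMsg (f acc)]) r"
| "rb f acc (PubCoin b # r) = rb f (acc @ [PubCoin b]) r"

definition pf :: "event list \<Rightarrow> bool" where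
  "pf h \<longleftrightarrow> (\<forall>b. PubCoin b \<notin> set h)"

definition cons :: "(event list \<Rightarrow> nat) \<Rightarrow> event list \<Rightarrow> bool" where
  "cons f h \<longleftrightarrow> (\<forall>i<length h. \<forall>r. h ! i = PMsg r \<longrightarrow> r = f (take i h))"

lemma cons_simps[simp]: "cons f []" "cons f (h @ [VMsg n]) = cons f h"
  "cons f (h @ [PMsg r]) = (cons f h \<and> r = f h)"
  by (auto simp: cons_def nth_append less_Suc_eq)

lemma dec_append[simp]: "dec V (a @ b) = dec V a @ dec V b"
  by (induction V a rule: dec.induct) auto

lemma pf_simps[simp]: "pf [] " "pf (a @ b) = (pf a \<and> pf b)" "pf [VMsg n]" "pf [PMsg n]"
  by (auto simp: pf_def)

lemma rb_dec: "pf h \<Longrightarrow> (\<forall>i<length h. \<forall>r. h ! i = PMsg r \<longrightarrow> r = f (acc @ take i h)) \<Longrightarrow>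
   rb f acc (dec V h) = acc @ h"
proof (induction V h arbitrary: acc rule: dec.induct)
  case (2 V n r)
  then have "pf r" by (auto simp: pf_def)
  have c: "\<forall>i<length r. \<forall>x. r ! i = PMsg x \<longrightarrow> x = f ((acc @ [VMsg n]) @ take i r)"
  proof (intro allI impI)
    fix i x assume "i < length r" "r ! i = PMsg x"
    then show "x = f ((acc @ [VMsg n]) @ take i r)" using "2.prems"(2)[rule_format, of "Suc i" x] by simp
  qed
  show ?case
  proof (cases "n mod 3 = 0")
    case True
    then have "3 * (n div 3) = n" by presburger
    then show ?thesis using 2 \<open>pf r\<close> True c by auto
  next
    case False
    then have "n mod 3 = 1 \<or> n mod 3 = 2" by auto
    then have "3 * (n div 3) + b12 (n mod 3 = 2) = n" by (auto simp: b12_def; presburger)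
    then show ?thesis using 2 \<open>pf r\<close> False c by auto
  qed
next
  case (3 V x r)
  have c: "\<forall>i<length r. \<forall>y. r ! i = PMsg y \<longrightarrow> y = f ((acc @ [PMsg x]) @ take i r)"
  proof (intro allI impI)
    fix i y assume "i < length r" "r ! i = PMsg y"
    then show "y = f ((acc @ [PMsg x]) @ take i r)" using "3.prems"(2)[rule_format, of "Suc i" y] by simp
  qed
  have "x = f acc" using "3.prems"(2)[rule_format, of 0 x] by simp
  then show ?case using 3 c by (auto simp: pf_def)
qed (auto simp: pf_def)

definition simrel :: "'i verifier \<Rightarrow> (event list \<Rightarrow> nat) \<Rightarrow> 'i list \<Rightarrow> config \<Rightarrow> config \<Rightarrow> bool" where
  "simrel V f w c c' \<longleftrightarrow> st c' = 3 * st c \<and> ipos c' = ipos c \<and> tape c' = tape c \<and>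
     wpos c' = wpos c \<and> ccell c = clampc V (ccell c') \<and> hist c = dec V (hist c') \<and> pf (hist c') \<and>
     cons f (hist c') \<and>
     visited c' = visited c \<and> nprivb c' = nprivb c + npubb c \<and> npubb c' = 0 \<and>
     nsteps c' = 2 * nsteps c \<and> ipos c \<le> length w + 1 \<and> wpos c \<in> visited c"

lemma simrel_init: "wf_verifier V \<Longrightarrow> simrel V f w (init_config V) (init_config (conv V))"
  by (auto simp: simrel_def init_config_def clampc_def wf_verifier_def)

lemma first_step:
  assumes S: "simrel V f w c c'"
  shows "step (conv V) P' w c' bp False = c'\<lparr>st := 3 * st c + b12 bp,
     nprivb := nprivb c' + (if priv V (st c) then 1 else 0), nsteps := Suc (nsteps c')\<rparr>"
proof -
  have "nat (min (int (length w) + 1) (int (ipos c'))) = ipos c'" using S by (auto simp: simrel_def)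
  moreover have "insert (wpos c') (visited c') = visited c'" using S by (auto simp: simrel_def)
  ultimately show ?thesis using S by (simp add: step_def Let_def simrel_def)
qed

lemma two_step:
  assumes wf: "wf_verifier V" and H: "\<forall>h'. pf h' \<and> cons (P' w) h' \<longrightarrow> P w (dec V h') = clampc V (P' w h')"
    and S: "simrel V (P' w) w c c'"
  shows "simrel V (P' w) w (step V P w c bp bu) (step (conv V) P' w (step (conv V) P' w c' bp False) bu False)"
proof -
  have pc: "pub V q \<Longrightarrow> comm V q" for q using wf by (auto simp: wf_verifier_def)
  obtain q' x' m di dw where e: "delta V (st c) (input_cell w (ipos c)) (tape c (wpos c)) (ccell c) bp bu = (q', x', m, di, dw)"
    by (cases "delta V (st c) (input_cell w (ipos c)) (tape c (wpos c)) (ccell c) bp bu") auto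
  define h2 where "h2 = (if comm V (st c) then (if pub V (st c) then hist c @ [PubCoin bu] else hist c) @ [VMsg m]
                          else hist c)"
  define h2' where "h2' = (if comm V (st c) then hist c' @ [VMsg (if pub V (st c) then 3*m + b12 bu else 3*m)] else hist c')"
  have pf2: "pf h2'" using S by (auto simp: h2'_def simrel_def)
  have cs2: "cons (P' w) h2'" using S by (auto simp: h2'_def simrel_def)
  have dh: "h2 = dec V h2'" using S pc[of "st c"] by (auto simp: h2_def h2'_def simrel_def)
  have rr: "P w h2 = clampc V (P' w h2')" using H pf2 cs2 dh by simp
  have old: "step V P w c bp bu = \<lparr>st = q', ipos = nat (min (int (length w) + 1) (int (ipos c) + di)),
      tape = (tape c)(wpos c := x'), wpos = nat (int (wpos c) + dw),
      ccell = (if comm V (st c) then P w h2 else ccell c),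
      hist = (if comm V (st c) then h2 @ [PMsg (P w h2)] else h2),
      visited = insert (nat (int (wpos c) + dw)) (visited c),
      nprivb = nprivb c + (if priv V (st c) then 1 else 0),
      npubb = npubb c + (if pub V (st c) then 1 else 0),
      nsteps = Suc (nsteps c)\<rparr>"
    using e pc[of "st c"] by (auto simp: step_def Let_def h2_def)
  have e': "delta (conv V) (3 * st c + b12 bp) (input_cell w (ipos c)) (tape c (wpos c)) (ccell c') bu False
     = (3*q', x', if pub V (st c) then 3*m + b12 bu else 3*m, di, dw)"
    using e S by (simp add: simrel_def)
  have new: "step (conv V) P' w (step (conv V) P' w c' bp False) bu False =
     \<lparr>st = 3*q', ipos = nat (min (int (length w) + 1) (int (ipos c) + di)),
      tape = (tape c)(wpos c := x'), wpos = nat (int (wpos c) + dw),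
      ccell = (if comm V (st c) then P' w h2' else ccell c'),
      hist = (if comm V (st c) then h2' @ [PMsg (P' w h2')] else h2'),
      visited = insert (nat (int (wpos c) + dw)) (visited c),
      nprivb = nprivb c' + (if priv V (st c) then 1 else 0) + (if pub V (st c) then 1 else 0),
      npubb = 0,
      nsteps = Suc (Suc (nsteps c'))\<rparr>"
    using e' S unfolding first_step[OF S] by (auto simp: step_def Let_def h2'_def simrel_def)
  have z: "0 \<in> commA V" using wf by (simp add: wf_verifier_def)
  show ?thesis unfolding old new using S rr dh pf2 cs2 z
    by (auto simp: simrel_def)
qed

primrec gen :: "'i verifier \<Rightarrow> 'i prover \<Rightarrow> 'i list \<Rightarrow> (config \<Rightarrow> real) \<Rightarrow> nat \<Rightarrow> config \<Rightarrow> real" where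
  "gen V P w B 0 c = B c"
| "gen V P w B (Suc k) c = (if halted V c then B c else avg_step V P w c (gen V P w B k))"

lemma acc_gen: "acc_within V P w k = gen V P w (\<lambda>c. if st c = accst V then 1 else 0) k"
  by (induction k) (rule ext, simp add: halted_def)+

lemma rej_gen: "rej_within V P w k = gen V P w (\<lambda>c. if st c = rejst V then 1 else 0) k"
  by (induction k) (rule ext, simp add: halted_def)+

lemma exp_gen: "exp_within V P w R k = gen V P w (\<lambda>c. real (R c)) k"
  by (induction k) (rule ext, simp)+

lemma product_single: "List.product A [x] = map (\<lambda>a. (a, x)) A"
  by (induction A) auto

lemma sum_product: "sum_list (map (\<lambda>(a, b). G a b) (List.product A B)) = sum_list (map (\<lambda>a. sum_list (map (G a) B)) A)"
  by (induction A) (auto simp: comp_def)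

lemma sum_list_div: "sum_list (map (\<lambda>x. f x / (c::real)) xs) = sum_list (map f xs) / c"
  by (induction xs) (auto simp: add_divide_distrib)

lemma simrel_facts:
  assumes S: "simrel V f w c c'"
  shows "halted (conv V) c' = halted V c"
    "(st c' = accst (conv V)) = (st c = accst V)"
    "(st c' = rejst (conv V)) = (st c = rejst V)"
    "outcomes (conv V) c' = map (\<lambda>a. (a, False)) (coins (priv V (st c)))"
    "\<not> halted (conv V) (step (conv V) P' w c' bp False)"
    "outcomes (conv V) (step (conv V) P' w c' bp False) = map (\<lambda>a. (a, False)) (coins (pub V (st c)))"
  using S by (auto simp: simrel_def halted_def outcomes_def first_step[OF S] product_single coins_def)

lemma gen_sim:
  assumes wf: "wf_verifier V" and H: "\<forall>h'. pf h' \<and> cons (P' w) h' \<longrightarrow> P w (dec V h') = clampc V (P' w h')"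
    and BB: "\<And>c c'. simrel V (P' w) w c c' \<Longrightarrow> B' c' = B c"
  shows "simrel V (P' w) w c c' \<Longrightarrow> gen (conv V) P' w B' (2 * k) c' = gen V P w B k c"
proof (induction k arbitrary: c c')
  case 0
  then show ?case using BB by simp
next
  case (Suc k)
  note S = Suc.prems
  show ?case
  proof (cases "halted V c")
    case True
    then show ?thesis using simrel_facts(1)[OF S] BB[OF S] by simp
  next
    case False
    define A where "A = coins (priv V (st c))"
    define Bc where "Bc = coins (pub V (st c))"
    define d where "d bp = step (conv V) P' w c' bp False" for bp
    have inner: "gen (conv V) P' w B' (Suc (2 * k)) (d bp) =
        sum_list (map (\<lambda>bu. gen V P w B k (step V P w c bp bu)) Bc) / real (length Bc)" for bp
    proof -
      have "gen (conv V) P' w B' (Suc (2 * k)) (d bp) = avg_step (conv V) P' w (d bp) (gen (conv V) P' w B' (2 * k))"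
        using simrel_facts(5)[OF S] by (simp add: d_def)
      also have "\<dots> = sum_list (map (\<lambda>bu. gen (conv V) P' w B' (2 * k) (step (conv V) P' w (d bp) bu False)) Bc) / real (length Bc)"
        using simrel_facts(6)[OF S] by (simp add: avg_step_def d_def Bc_def comp_def)
      also have "\<dots> = sum_list (map (\<lambda>bu. gen V P w B k (step V P w c bp bu)) Bc) / real (length Bc)"
        using Suc.IH[OF two_step[where V=V and P'=P' and w=w and P=P, OF wf H S]] by (simp add: d_def)
      finally show ?thesis .
    qed
    have "gen (conv V) P' w B' (2 * Suc k) c' = avg_step (conv V) P' w c' (gen (conv V) P' w B' (Suc (2 * k)))"
      using False simrel_facts(1)[OF S] by simp
    also have "\<dots> = sum_list (map (\<lambda>bp. gen (conv V) P' w B' (Suc (2 * k)) (d bp)) A) / real (length A)"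
      using simrel_facts(4)[OF S] by (simp add: avg_step_def d_def A_def comp_def)
    also have "\<dots> = sum_list (map (\<lambda>bp. sum_list (map (\<lambda>bu. gen V P w B k (step V P w c bp bu)) Bc)) A)
        / real (length Bc) / real (length A)"
      by (simp only: inner sum_list_div)
    also have "\<dots> = avg_step V P w c (gen V P w B k)"
      by (simp add: avg_step_def outcomes_def A_def Bc_def sum_product[where G="\<lambda>bp bu. gen V P w B k (step V P w c bp bu)"])
    also have "\<dots> = gen V P w B (Suc k) c" using False by simp
    finally show ?thesis .
  qed
qed

lemma outcomes_ne: "length (outcomes V c) > 0"
  by (simp add: outcomes_def coins_def)

lemma avg_le:
  assumes "\<And>bp bu. (bp, bu) \<in> set (outcomes V c) \<Longrightarrow> F (step V P w c bp bu) \<le> a"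
  shows "avg_step V P w c F \<le> a"
proof -
  have "sum_list (map (\<lambda>(bp, bu). F (step V P w c bp bu)) (outcomes V c)) \<le> sum_list (map (\<lambda>_. a) (outcomes V c))"
    by (rule sum_list_mono) (use assms in auto)
  also have "\<dots> = real (length (outcomes V c)) * a" by (simp add: sum_list_triv)
  finally show ?thesis using outcomes_ne[of V c] by (simp add: avg_step_def divide_le_eq mult.commute)
qed

lemma avg_ge:
  assumes "\<And>bp bu. (bp, bu) \<in> set (outcomes V c) \<Longrightarrow> a \<le> F (step V P w c bp bu)"
  shows "a \<le> avg_step V P w c F"
proof -
  have "sum_list (map (\<lambda>_. a) (outcomes V c)) \<le> sum_list (map (\<lambda>(bp, bu). F (step V P w c bp bu)) (outcomes V c))"
    by (rule sum_list_mono) (use assms in auto)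
  moreover have "sum_list (map (\<lambda>_. a) (outcomes V c)) = real (length (outcomes V c)) * a" by (simp add: sum_list_triv)
  ultimately show ?thesis using outcomes_ne[of V c] by (simp add: avg_step_def le_divide_eq mult.commute)
qed

lemma gen_01: "(\<And>c. 0 \<le> B c \<and> B c \<le> 1) \<Longrightarrow> 0 \<le> gen V P w B k c \<and> gen V P w B k c \<le> 1"
proof (induction k arbitrary: c)
  case 0 then show ?case by simp
next
  case (Suc k)
  then show ?case by (auto intro!: avg_le avg_ge)
qed

lemma sup_le:
  fixes a b :: "nat \<Rightarrow> real"
  assumes "\<And>k. a k = b (2 * k)" "\<And>k. b k \<le> 1"
  shows "(SUP k. a k) \<le> (SUP k. b k)"
proof (rule cSUP_least)
  fix k
  have bd: "bdd_above (range b)" using assms(2) by (intro bdd_aboveI[where M=1]) auto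
  show "a k \<le> (SUP k. b k)" unfolding assms(1) using cSUP_upper[OF _ bd, of "2 * k"] by simp
qed simp

lemma sim_prob:
  assumes wf: "wf_verifier V" and H: "\<forall>h'. pf h' \<and> cons (P' w) h' \<longrightarrow> P w (dec V h') = clampc V (P' w h')"
  shows "acc_prob V P w \<le> acc_prob (conv V) P' w" "rej_prob V P w \<le> rej_prob (conv V) P' w"
proof -
  have S0: "simrel V (P' w) w (init_config V) (init_config (conv V))" by (rule simrel_init[OF wf])
  show "acc_prob V P w \<le> acc_prob (conv V) P' w"
    unfolding acc_prob_def acc_gen
  proof (rule sup_le)
    fix k
    show "gen V P w (\<lambda>c. if st c = accst V then 1 else 0) k (init_config V) =
      gen (conv V) P' w (\<lambda>c. if st c = accst (conv V) then 1 else 0) (2 * k) (init_config (conv V))"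
      by (rule gen_sim[where V=V and P'=P' and w=w and P=P, OF wf H _ S0, symmetric]) (auto simp: simrel_def)
    show "gen (conv V) P' w (\<lambda>c. if st c = accst (conv V) then 1 else 0) k (init_config (conv V)) \<le> 1"
      using gen_01[of "\<lambda>c. if st c = accst (conv V) then 1 else 0" "conv V" P' w k "init_config (conv V)"] by simp
  qed
  show "rej_prob V P w \<le> rej_prob (conv V) P' w"
    unfolding rej_prob_def rej_gen
  proof (rule sup_le)
    fix k
    show "gen V P w (\<lambda>c. if st c = rejst V then 1 else 0) k (init_config V) =
      gen (conv V) P' w (\<lambda>c. if st c = rejst (conv V) then 1 else 0) (2 * k) (init_config (conv V))"
      by (rule gen_sim[where V=V and P'=P' and w=w and P=P, OF wf H _ S0, symmetric]) (auto simp: simrel_def)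
    show "gen (conv V) P' w (\<lambda>c. if st c = rejst (conv V) then 1 else 0) k (init_config (conv V)) \<le> 1"
      using gen_01[of "\<lambda>c. if st c = rejst (conv V) then 1 else 0" "conv V" P' w k "init_config (conv V)"] by simp
  qed
qed

definition Pc :: "'i verifier \<Rightarrow> 'i prover \<Rightarrow> 'i prover" where
  "Pc V P = (\<lambda>w h. P w (dec V h))"

definition Ps :: "'i verifier \<Rightarrow> 'i prover \<Rightarrow> 'i prover" where
  "Ps V P' = (\<lambda>w h. clampc V (P' w (rb (P' w) [] h)))"

lemma Pc_ok: "valid_prover V P \<Longrightarrow> valid_prover (conv V) (Pc V P) \<and>
   (\<forall>w h'. pf h' \<and> cons (Pc V P w) h' \<longrightarrow> P w (dec V h') = clampc V (Pc V P w h'))"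
  by (auto simp: valid_prover_def Pc_def clampc_def)

lemma Ps_ok: "wf_verifier V \<Longrightarrow> valid_prover V (Ps V P') \<and>
   (\<forall>w h'. pf h' \<and> cons (P' w) h' \<longrightarrow> Ps V P' w (dec V h') = clampc V (P' w h'))"
proof (intro conjI allI impI)
  assume "wf_verifier V"
  then show "valid_prover V (Ps V P')" by (auto simp: valid_prover_def Ps_def clampc_def wf_verifier_def)
next
  fix w h' assume "pf h' \<and> cons (P' w) h'"
  then have "rb (P' w) [] (dec V h') = h'" using rb_dec[of h' "P' w" "[]" V] by (simp add: cons_def)
  then show "Ps V P' w (dec V h') = clampc V (P' w h')" by (simp add: Ps_def)
qed

lemma verifies_conv: assumes wf: "wf_verifier V" and v: "verifies V L ep em"
  shows "verifies (conv V) L ep em"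
proof -
  obtain P where P: "valid_prover V P" "\<forall>w\<in>L. acc_prob V P w \<ge> 1 - ep"
    using v by (auto simp: verifies_def)
  have sound: "\<forall>P. valid_prover V P \<longrightarrow> (\<forall>w. w \<notin> L \<longrightarrow> rej_prob V P w \<ge> 1 - em)"
    using v by (auto simp: verifies_def)
  have c1: "valid_prover (conv V) (Pc V P)" using Pc_ok[OF P(1)] by simp
  have c2: "\<forall>w\<in>L. acc_prob (conv V) (Pc V P) w \<ge> 1 - ep"
  proof
    fix w assume "w \<in> L"
    have "acc_prob V P w \<le> acc_prob (conv V) (Pc V P) w"
      using sim_prob(1)[OF wf, of "Pc V P" w P] Pc_ok[OF P(1)] by blast
    then show "acc_prob (conv V) (Pc V P) w \<ge> 1 - ep" using P(2) \<open>w \<in> L\<close> by force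
  qed
  have s: "rej_prob (conv V) P' w \<ge> 1 - em" if "valid_prover (conv V) P'" "w \<notin> L" for P' w
  proof -
    have "rej_prob V (Ps V P') w \<le> rej_prob (conv V) P' w"
      using sim_prob(2)[OF wf, of P' w "Ps V P'"] Ps_ok[OF wf, of P'] by blast
    moreover have "rej_prob V (Ps V P') w \<ge> 1 - em" using sound Ps_ok[OF wf, of P'] that by blast
    ultimately show ?thesis by linarith
  qed
  show ?thesis using v c1 c2 s unfolding verifies_def by blast
qed

lemma step_counters:
  "nprivb (step V P w c bp bu) = nprivb c + (if priv V (st c) then 1 else 0)"
  "npubb (step V P w c bp bu) = npubb c + (if pub V (st c) then 1 else 0)"
  "nsteps (step V P w c bp bu) = Suc (nsteps c)"
  by (simp_all add: step_def Let_def split: prod.split)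

lemma step_visited: "\<exists>x. visited (step V P w c bp bu) = insert x (visited c)"
  by (auto simp: step_def Let_def split: prod.split)

lemma reach_finite: "c \<in> reach V P w \<Longrightarrow> finite (visited c)"
proof (induction rule: reach.induct)
  case init then show ?case by (simp add: init_config_def)
next
  case (step c bp bu)
  then show ?case using step_visited[of V P w c bp bu] by auto
qed

lemma reach_conv:
  assumes wf: "wf_verifier V" and H: "\<forall>h'. pf h' \<and> cons (P' w) h' \<longrightarrow> P w (dec V h') = clampc V (P' w h')"
  shows "c' \<in> reach (conv V) P' w \<Longrightarrow> (\<exists>c\<in>reach V P w. simrel V (P' w) w c c') \<or>
    (\<exists>c\<in>reach V P w. \<exists>d bp. \<not> halted V c \<and> bp \<in> set (coins (priv V (st c))) \<and>
        simrel V (P' w) w c d \<and> c' = step (conv V) P' w d bp False)"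
proof (induction rule: reach.induct)
  case init
  then show ?case using simrel_init[OF wf] reach.init by blast
next
  case (step c' bp bu)
  from step.IH show ?case
  proof (elim disjE bexE exE conjE)
    fix c assume c: "c \<in> reach V P w" and S: "simrel V (P' w) w c c'"
    have "\<not> halted V c" using step.hyps(2) simrel_facts(1)[OF S] by simp
    moreover have "bu = False" "bp \<in> set (coins (priv V (st c)))"
      using step.hyps(3) simrel_facts(4)[OF S] by auto
    ultimately show ?thesis using c S by blast
  next
    fix c d bp0 assume c: "c \<in> reach V P w" and nh: "\<not> halted V c"
      and b0: "bp0 \<in> set (coins (priv V (st c)))" and S: "simrel V (P' w) w c d"
      and e: "c' = step (conv V) P' w d bp0 False"
    have "bu = False" "bp \<in> set (coins (pub V (st c)))"
      using step.hyps(3) simrel_facts(6)[OF S, of P' bp0] e by auto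
    then have "(bp0, bp) \<in> set (outcomes V c)" using b0 by (simp add: outcomes_def)
    then have "step V P w c bp0 bp \<in> reach V P w" by (rule reach.step[OF c nh])
    moreover have "simrel V (P' w) w (step V P w c bp0 bp) (step (conv V) P' w c' bp bu)"
      using two_step[where V=V and P'=P' and w=w and P=P, OF wf H S] e \<open>bu = False\<close> by simp
    ultimately show ?thesis by blast
  qed
qed

lemma avg_mono:
  assumes "\<And>bp bu. (bp, bu) \<in> set (outcomes V c) \<Longrightarrow> F (step V P w c bp bu) \<le> G (step V P w c bp bu)"
  shows "avg_step V P w c F \<le> avg_step V P w c G"
proof -
  have "sum_list (map (\<lambda>(bp, bu). F (step V P w c bp bu)) (outcomes V c)) \<le> sum_list (map (\<lambda>(bp, bu). G (step V P w c bp bu)) (outcomes V c))"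
    by (rule sum_list_mono) (use assms in auto)
  then show ?thesis by (simp add: avg_step_def divide_right_mono)
qed

lemma gen_mono_Suc:
  assumes B: "\<And>c bp bu. c \<in> reach V P w \<Longrightarrow> B c \<le> B (step V P w c bp bu)"
  shows "c \<in> reach V P w \<Longrightarrow> gen V P w B k c \<le> gen V P w B (Suc k) c"
proof (induction k arbitrary: c)
  case 0
  then show ?case using B by (auto intro!: avg_ge)
next
  case (Suc k)
  show ?case
  proof (cases "halted V c")
    case False
    have "avg_step V P w c (gen V P w B k) \<le> avg_step V P w c (gen V P w B (Suc k))"
      by (rule avg_mono, rule Suc.IH, rule reach.step) (use Suc.prems False in auto)
    then show ?thesis using False by simp
  qed simp
qed

lemma gen_mono:
  assumes "\<And>c bp bu. c \<in> reach V P w \<Longrightarrow> B c \<le> B (step V P w c bp bu)" "c \<in> reach V P w" "k \<le> m"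
  shows "gen V P w B k c \<le> gen V P w B m c"
  using lift_Suc_mono_le[of "\<lambda>k. gen V P w B k c", OF gen_mono_Suc[OF assms(1,2)] assms(3)] by blast

lemma avg_lin:
  "avg_step V P w c (\<lambda>d. F d + G d) = avg_step V P w c F + avg_step V P w c G"
  "avg_step V P w c (\<lambda>d. a * F d) = a * avg_step V P w c F"
  "avg_step V P w c (\<lambda>d. 0) = 0"
  by (simp_all add: avg_step_def case_prod_unfold sum_list_addf add_divide_distrib sum_list_const_mult)

lemma gen_zero: "gen V P w (\<lambda>_. 0) k c = 0"
proof (induction k arbitrary: c)
  case (Suc k)
  have "gen V P w (\<lambda>_. 0) k = (\<lambda>_. 0)"
    using Suc.IH by auto
  then show ?case by (simp add: avg_lin)
qed simp

lemma gen_add: "gen V P w (\<lambda>c. B1 c + B2 c) k c = gen V P w B1 k c + gen V P w B2 k c"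
proof (induction k arbitrary: c)
  case (Suc k)
  have "(\<lambda>c. gen V P w (\<lambda>c. B1 c + B2 c) k c) = (\<lambda>c. gen V P w B1 k c + gen V P w B2 k c)"
    using Suc.IH by auto
  then show ?case by (simp add: avg_lin(1)[symmetric])
qed simp

lemma gen_scale: "gen V P w (\<lambda>c. a * B1 c) k c = a * gen V P w B1 k c"
proof (induction k arbitrary: c)
  case (Suc k)
  have "(\<lambda>c. gen V P w (\<lambda>c. a * B1 c) k c) = (\<lambda>c. a * gen V P w B1 k c)"
    using Suc.IH by auto
  then show ?case by (simp add: avg_lin(2)[symmetric])
qed simp

lemma bounds_conv:
  assumes wf: "wf_verifier V" and wb: "within_bounds e V bs bf bg bt"
  shows "within_bounds e (conv V) bs (\<lambda>n. bf n + bg n) (\<lambda>n. 0) (\<lambda>n. 2 * bt n)"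
  unfolding within_bounds_def
proof (intro allI impI)
  fix w P' assume vP': "valid_prover (conv V) P'"
  define P where "P = Ps V P'"
  have vP: "valid_prover V P" and H: "\<forall>h'. pf h' \<and> cons (P' w) h' \<longrightarrow> P w (dec V h') = clampc V (P' w h')"
    using Ps_ok[OF wf, of P'] unfolding P_def by blast+
  have B: "if e then
           (\<forall>k. exp_within V P w space_used k (init_config V) \<le> bs (length w) \<and>
                exp_within V P w nprivb k (init_config V) \<le> bf (length w) \<and>
                exp_within V P w npubb k (init_config V) \<le> bg (length w) \<and>
                exp_within V P w nsteps k (init_config V) \<le> bt (length w))
         else
           (\<forall>c\<in>reach V P w. real (space_used c) \<le> bs (length w) \<and>
                real (nprivb c) \<le> bf (length w) \<and>
                real (npubb c) \<le> bg (length w) \<and>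
                real (nsteps c) \<le> bt (length w))"
    using wb vP unfolding within_bounds_def by blast
  have S0: "simrel V (P' w) w (init_config V) (init_config (conv V))" by (rule simrel_init[OF wf])
  show "if e then
           (\<forall>k. exp_within (conv V) P' w space_used k (init_config (conv V)) \<le> bs (length w) \<and>
                exp_within (conv V) P' w nprivb k (init_config (conv V)) \<le> bf (length w) + bg (length w) \<and>
                exp_within (conv V) P' w npubb k (init_config (conv V)) \<le> 0 \<and>
                exp_within (conv V) P' w nsteps k (init_config (conv V)) \<le> 2 * bt (length w))
         else
           (\<forall>c\<in>reach (conv V) P' w. real (space_used c) \<le> bs (length w) \<and>
                real (nprivb c) \<le> bf (length w) + bg (length w) \<and>
                real (npubb c) \<le> 0 \<and>
                real (nsteps c) \<le> 2 * bt (length w))"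
  proof (cases e)
    case False
    then have B: "\<And>c. c \<in> reach V P w \<Longrightarrow> real (space_used c) \<le> bs (length w) \<and>
                real (nprivb c) \<le> bf (length w) \<and>
                real (npubb c) \<le> bg (length w) \<and>
                real (nsteps c) \<le> bt (length w)" using B by simp
    have "real (space_used c') \<le> bs (length w) \<and>
                real (nprivb c') \<le> bf (length w) + bg (length w) \<and>
                real (npubb c') \<le> 0 \<and>
                real (nsteps c') \<le> 2 * bt (length w)" if r: "c' \<in> reach (conv V) P' w" for c'
      using reach_conv[where V=V and P'=P' and w=w and P=P, OF wf H r]
    proof (elim disjE bexE exE conjE)
      fix c assume c: "c \<in> reach V P w" and S: "simrel V (P' w) w c c'"
      show ?thesis using B[OF c] S by (auto simp: simrel_def space_used_def)
    next
      fix c d bp assume c: "c \<in> reach V P w" and nh: "\<not> halted V c"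
        and S: "simrel V (P' w) w c d" and e: "c' = step (conv V) P' w d bp False"
      have "(bp, False) \<in> set (outcomes V c)" if "bp \<in> set (coins (priv V (st c)))"
        using that by (simp add: outcomes_def coins_def)
      have c1: "step V P w c False False \<in> reach V P w"
        by (rule reach.step[OF c nh]) (simp add: outcomes_def coins_def)
      have c2: "step V P w c True False \<in> reach V P w" if "priv V (st c)"
        by (rule reach.step[OF c nh]) (use that in \<open>simp add: outcomes_def coins_def\<close>)
      obtain c3 where c3: "c3 \<in> reach V P w" "nprivb c3 = nprivb c + (if priv V (st c) then 1 else 0)"
          "nsteps c3 = Suc (nsteps c)"
        using c1 step_counters[of V P w c False False] by blast
      have ce: "c' = d\<lparr>st := 3 * st c + b12 bp,
         nprivb := nprivb d + (if priv V (st c) then 1 else 0), nsteps := Suc (nsteps d)\<rparr>"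
        using first_step[OF S] e by simp
      show ?thesis using B[OF c] B[OF c3(1)] c3 S ce by (auto simp: simrel_def space_used_def)
    qed
    then show ?thesis using False by simp
  next
    case True
    then have B: "\<And>k. exp_within V P w space_used k (init_config V) \<le> bs (length w) \<and>
                exp_within V P w nprivb k (init_config V) \<le> bf (length w) \<and>
                exp_within V P w npubb k (init_config V) \<le> bg (length w) \<and>
                exp_within V P w nsteps k (init_config V) \<le> bt (length w)" using B by simp
    have I0: "init_config (conv V) \<in> reach (conv V) P' w" by (rule reach.init)
    have mono: "exp_within (conv V) P' w R k (init_config (conv V)) \<le> exp_within (conv V) P' w R (2 * k) (init_config (conv V))"
      if "\<And>c bp bu. c \<in> reach (conv V) P' w \<Longrightarrow> R c \<le> R (step (conv V) P' w c bp bu)" for R k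
      unfolding exp_gen by (rule gen_mono[OF _ I0]) (use that in auto)
    have m1: "space_used c \<le> space_used (step (conv V) P' w c bp bu)" if "c \<in> reach (conv V) P' w" for c bp bu
      using reach_finite[OF that] step_visited[of "conv V" P' w c bp bu]
      by (auto simp: space_used_def card_insert_le)
    have simr: "gen (conv V) P' w B' (2 * k) (init_config (conv V)) = gen V P w B0 k (init_config V)"
      if "\<And>c c'. simrel V (P' w) w c c' \<Longrightarrow> B' c' = B0 c" for B' B0 k
      by (rule gen_sim[where V=V and P'=P' and w=w and P=P, OF wf H that S0])
    show ?thesis
    proof (simp only: True if_True, intro allI conjI)
      fix k
      have "exp_within (conv V) P' w space_used k (init_config (conv V)) \<le> exp_within (conv V) P' w space_used (2 * k) (init_config (conv V))"
        by (rule mono) (rule m1)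
      also have "\<dots> = exp_within V P w space_used k (init_config V)"
        unfolding exp_gen by (rule simr) (simp add: simrel_def space_used_def)
      finally show "exp_within (conv V) P' w space_used k (init_config (conv V)) \<le> bs (length w)"
        using B[of k] by linarith
      have "exp_within (conv V) P' w nprivb k (init_config (conv V)) \<le> exp_within (conv V) P' w nprivb (2 * k) (init_config (conv V))"
        by (rule mono) (simp add: step_counters)
      also have "\<dots> = gen V P w (\<lambda>c. real (nprivb c) + real (npubb c)) k (init_config V)"
        unfolding exp_gen by (rule simr) (simp add: simrel_def)
      also have "\<dots> = exp_within V P w nprivb k (init_config V) + exp_within V P w npubb k (init_config V)"
        by (simp add: gen_add exp_gen)
      finally show "exp_within (conv V) P' w nprivb k (init_config (conv V)) \<le> bf (length w) + bg (length w)"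
        using B[of k] by linarith
      have "exp_within (conv V) P' w npubb k (init_config (conv V)) \<le> exp_within (conv V) P' w npubb (2 * k) (init_config (conv V))"
        by (rule mono) (simp add: step_counters)
      also have "\<dots> = gen V P w (\<lambda>c. 0) k (init_config V)"
        unfolding exp_gen by (rule simr) (simp add: simrel_def)
      also have "\<dots> = 0" by (rule gen_zero)
      finally show "exp_within (conv V) P' w npubb k (init_config (conv V)) \<le> 0" .
      have "exp_within (conv V) P' w nsteps k (init_config (conv V)) \<le> exp_within (conv V) P' w nsteps (2 * k) (init_config (conv V))"
        by (rule mono) (simp add: step_counters)
      also have "\<dots> = gen V P w (\<lambda>c. 2 * real (nsteps c)) k (init_config V)"
        unfolding exp_gen by (rule simr) (simp add: simrel_def)
      also have "\<dots> = 2 * exp_within V P w nsteps k (init_config V)"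
        by (simp add: gen_scale exp_gen)
      finally show "exp_within (conv V) P' w nsteps k (init_config (conv V)) \<le> 2 * bt (length w)"
        using B[of k] by linarith
    qed
  qed
qed

lemma admissible_conv:
  assumes "admissible e True V s f g t"
  shows "admissible e False (conv V) s (\<lambda>n. f n + g n) (\<lambda>_. 0) t"
proof -
  have wf: "wf_verifier V" using assms by (simp add: admissible_def)
  obtain bs bf bg bt where b: "bs \<in> O(\<lambda>n. real (s n))" "bf \<in> O(\<lambda>n. real (f n))"
        "bg \<in> O(\<lambda>n. real (g n))" "bt \<in> O(\<lambda>n. real (t n))" "within_bounds e V bs bf bg bt"
    using assms unfolding admissible_def by blast
  have f1: "(\<lambda>n. real (f n)) \<in> O(\<lambda>n. real (f n + g n))"
    by (rule bigoI[where c=1]) simp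
  have g1: "(\<lambda>n. real (g n)) \<in> O(\<lambda>n. real (f n + g n))"
    by (rule bigoI[where c=1]) simp
  have "(\<lambda>n. bf n + bg n) \<in> O(\<lambda>n. real (f n + g n))"
    by (rule sum_in_bigo(1)) (use landau_o.big_trans[OF b(2) f1] landau_o.big_trans[OF b(3) g1] in auto)
  moreover have "(\<lambda>n. 2 * bt n) \<in> O(\<lambda>n. real (t n))" using b(4) by simp
  moreover have "(\<lambda>n. 0::real) \<in> O(\<lambda>n. real ((\<lambda>_. 0::nat) n))" by simp
  moreover have "\<not> False \<longrightarrow> (\<forall>q\<in>states (conv V). \<not> pub (conv V) q)" by simp
  ultimately show ?thesis unfolding admissible_def using wf_conv[OF wf] b(1) bounds_conv[OF wf b(5)]
    by blast
qed

theorem lemma2: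
  fixes s f g t :: "nat \<Rightarrow> nat"
  shows "\<forall>expected.
           (IP expected True s f g t
              \<subseteq> (IP expected False s (\<lambda>n. f n + g n) (\<lambda>_. 0) t :: ('i::finite) list set set)) \<and>
           (IP_high expected True s f g t
              \<subseteq> (IP_high expected False s (\<lambda>n. f n + g n) (\<lambda>_. 0) t :: ('i::finite) list set set))"
proof (intro allI conjI subsetI)
  fix e and L :: "'i list set"
  assume L: "L \<in> IP e True s f g t"
  show "L \<in> IP e False s (\<lambda>n. f n + g n) (\<lambda>_. 0) t"
    unfolding IP_def
  proof (intro CollectI allI impI)
    fix \<epsilon> :: real assume "\<epsilon> > 0"
    then obtain V ep em where "admissible e True V s f g t" "verifies V L ep em" "max ep em \<le> \<epsilon>"
      using L unfolding IP_def by blast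
    moreover have "wf_verifier V" using \<open>admissible e True V s f g t\<close> by (simp add: admissible_def)
    ultimately show "\<exists>V ep em. admissible e False V s (\<lambda>n. f n + g n) (\<lambda>_. 0) t \<and> verifies V L ep em \<and> max ep em \<le> \<epsilon>"
      using admissible_conv verifies_conv by blast
  qed
next
  fix e and L :: "'i list set"
  assume L: "L \<in> IP_high e True s f g t"
  then obtain V ep em where "admissible e True V s f g t" "verifies V L ep em"
    unfolding IP_high_def by blast
  moreover have "wf_verifier V" using \<open>admissible e True V s f g t\<close> by (simp add: admissible_def)
  ultimately show "L \<in> IP_high e False s (\<lambda>n. f n + g n) (\<lambda>_. 0) t"
    unfolding IP_high_def using admissible_conv verifies_conv by blast
qed

end
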